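(* Let $D\subset\mathbb N^n$ be finite, not contained in any coordinate hyperplane, and $p$ a prime. Then (i) the sets $MI_{D,p}(r)$, $r\ge1$, are pairwise disjoint; (ii) $MI_{D,p}(r)$ is empty for $r$ large enough; (iii) $\delta_r$ maps $MI_{D,p}(r)$ to itself, and for all $i,k$ and $U\in MI_{D,p}(r)$, $\varphi_{\delta_r^kU}(i)=\varphi_U(i+k)$.
   Context: $s_p$ = base-$p$ digit sum. $E_{D,p}(r)$ = set of $U=(u_{\mathbf d})_{\mathbf d\in D}\in\{0,\dots,p^r-1\}^D$ with $\sum u_{\mathbf d}\mathbf d\equiv0\pmod{p^r-1}$ and all coordinates of $\sum u_{\mathbf d}\mathbf d$ positive; $s_p(U)=\sum s_p(u_{\mathbf d})$; $\delta_p(D)=\frac1{p-1}\min_{r\ge1}\min_{U\in E_{D,p}(r)}s_p(U)/r$; $U\in E_{D,p}(r)$ is minimal if $s_p(U)=(p-1)r\delta_p(D)$. The shift $\delta_r$ on $\{0,\dots,p^r-1\}$ sends $k\le p^r-2$ to $pk\bmod(p^r-1)$ and fixes $p^r-1$, applied coordinatewise. For $U\in E_{D,p}(r)$, $\varphi_U:\mathbb Z/r\mathbb Z\to\mathbb N_{>0}^n$, $\varphi_U(k)=\frac1{p^r-1}\sum_{\mathbf d}\mathbf d(\delta_r^kU)_{\mathbf d}$; $U$ is irreducible if $\varphi_U$ is injective; $MI_{D,p}(r)$ is the set of minimal irreducible elements of $E_{D,p}(r)$. *)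

theory Defs
  imports Main "HOL-Computational_Algebra.Primes" Complex_Main
begin

text \<open>Vectors in N^n are functions of type 'n \<Rightarrow> nat for a finite index type 'n.
  A tuple U = (u_d)_{d in D} is a function ('n \<Rightarrow> nat) \<Rightarrow> nat that vanishes outside D.\<close>

function digsum :: "nat \<Rightarrow> nat \<Rightarrow> nat" where
  "digsum p k = (if p < 2 \<or> k = 0 then 0 else k mod p + digsum p (k div p))"
  by auto
termination by (relation "measure snd") auto

definition sU :: "('n \<Rightarrow> nat) set \<Rightarrow> nat \<Rightarrow> (('n \<Rightarrow> nat) \<Rightarrow> nat) \<Rightarrow> nat" where
  "sU D p U = (\<Sum>d\<in>D. digsum p (U d))"

definition vsum :: "('n \<Rightarrow> nat) set \<Rightarrow> (('n \<Rightarrow> nat) \<Rightarrow> nat) \<Rightarrow> 'n \<Rightarrow> nat" where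
  "vsum D U = (\<lambda>i. \<Sum>d\<in>D. U d * d i)"

definition E :: "('n \<Rightarrow> nat) set \<Rightarrow> nat \<Rightarrow> nat \<Rightarrow> (('n \<Rightarrow> nat) \<Rightarrow> nat) set" where
  "E D p r = {U. 1 \<le> r \<and> (\<forall>d\<in>D. U d \<le> p ^ r - 1) \<and> (\<forall>d. d \<notin> D \<longrightarrow> U d = 0)
      \<and> (\<forall>i. (p ^ r - 1) dvd vsum D U i \<and> 0 < vsum D U i)}"

definition delta :: "('n \<Rightarrow> nat) set \<Rightarrow> nat \<Rightarrow> real" where
  "delta D p = Inf {real (sU D p U) / real r | r U. 1 \<le> r \<and> U \<in> E D p r} / real (p - 1)"

definition minimal :: "('n \<Rightarrow> nat) set \<Rightarrow> nat \<Rightarrow> nat \<Rightarrow> (('n \<Rightarrow> nat) \<Rightarrow> nat) \<Rightarrow> bool" where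
  "minimal D p r U \<longleftrightarrow> U \<in> E D p r \<and> real (sU D p U) = real (p - 1) * real r * delta D p"

text \<open>the shift delta_r on {0..p^r-1}\<close>
definition shiftnum :: "nat \<Rightarrow> nat \<Rightarrow> nat \<Rightarrow> nat" where
  "shiftnum p r k = (if k \<le> p ^ r - 2 then (p * k) mod (p ^ r - 1) else k)"

definition shiftU :: "nat \<Rightarrow> nat \<Rightarrow> (('n \<Rightarrow> nat) \<Rightarrow> nat) \<Rightarrow> (('n \<Rightarrow> nat) \<Rightarrow> nat)" where
  "shiftU p r U = (\<lambda>d. shiftnum p r (U d))"

text \<open>phi_U, with Z/rZ represented by nat (phi_U is r-periodic)\<close>
definition phi :: "('n \<Rightarrow> nat) set \<Rightarrow> nat \<Rightarrow> nat \<Rightarrow> (('n \<Rightarrow> nat) \<Rightarrow> nat) \<Rightarrow> nat \<Rightarrow> ('n \<Rightarrow> nat)" where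
  "phi D p r U k = (\<lambda>i. vsum D ((shiftU p r ^^ k) U) i div (p ^ r - 1))"

definition irreducible_U :: "('n \<Rightarrow> nat) set \<Rightarrow> nat \<Rightarrow> nat \<Rightarrow> (('n \<Rightarrow> nat) \<Rightarrow> nat) \<Rightarrow> bool" where
  "irreducible_U D p r U \<longleftrightarrow> inj_on (phi D p r U) {0..<r}"

definition MI :: "('n \<Rightarrow> nat) set \<Rightarrow> nat \<Rightarrow> nat \<Rightarrow> (('n \<Rightarrow> nat) \<Rightarrow> nat) set" where
  "MI D p r = {U \<in> E D p r. minimal D p r U \<and> irreducible_U D p r U}"

end

theory Submission
  imports Defs "HOL-Number_Theory.Cong" "HOL-Library.FuncSet"
begin

declare digsum.simps[simp del]

lemma digsum_rec: "p \<ge> 2 \<Longrightarrow> digsum p b = b mod p + digsum p (b div p)"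
  by (cases "b = 0") (simp_all add: digsum.simps)

lemma digsum_pos: "p \<ge> 2 \<Longrightarrow> 0 < u \<Longrightarrow> 0 < digsum p u"
proof (induction u rule: less_induct)
  case (less u)
  have rec: "digsum p u = u mod p + digsum p (u div p)" using digsum_rec less.prems(1) by blast
  show ?case
  proof (cases "u mod p = 0")
    case True
    then obtain k where k: "u = p * k" by blast
    have p0: "p > 0" using less.prems(1) by simp
    have kd: "u div p = k" using k p0 by simp
    have "k > 0" using k less.prems(2) by (cases k) auto
    moreover have "k < u" using k p0 less.prems by (metis \<open>0 < k\<close> less_le_trans lessI mult_less_cancel2 nat_mult_1 one_less_numeral_iff semiring_norm(76))
    ultimately have "0 < digsum p k" using less.IH less.prems(1) by blast
    then show ?thesis using rec kd by simp
  next
    case False then show ?thesis using rec by simp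
  qed
qed

lemma digsum_top: "p \<ge> 2 \<Longrightarrow> a < p \<Longrightarrow> b < p ^ m \<Longrightarrow> digsum p (a * p ^ m + b) = a + digsum p b"
proof (induction m arbitrary: b)
  case 0
  then show ?case using digsum_rec[of p a] by simp
next
  case (Suc m)
  have e1: "(a * p ^ Suc m + b) mod p = b mod p" by (simp add: mod_add_left_eq[symmetric])
  have e2: "(a * p ^ Suc m + b) div p = a * p ^ m + b div p"
  proof -
    have "a * p ^ Suc m + b = b + (a * p ^ m) * p" by (simp add: algebra_simps)
    moreover have "(b + (a * p ^ m) * p) div p = a * p ^ m + b div p"
      using Suc.prems by (subst div_mult_self1) auto
    ultimately show ?thesis by (metis (no_types) \<open>a * p ^ Suc m + b = b + (a * p ^ m) * p\<close>)
  qed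
  have "b div p < p ^ m" using Suc.prems by (simp add: div_less_iff_less_mult mult.commute)
  then have "digsum p (a * p ^ m + b div p) = a + digsum p (b div p)" using Suc by blast
  then show ?case using digsum_rec[of p "a * p ^ Suc m + b"] digsum_rec[of p b] Suc.prems e1 e2 by simp
qed

lemma coprime_N: "(p::nat) \<ge> 1 \<Longrightarrow> r \<ge> 1 \<Longrightarrow> coprime (p ^ r - 1) p"
proof -
  assume a: "p \<ge> 1" "r \<ge> 1"
  have "p ^ r = Suc (p ^ r - 1)" using a by simp
  then have "coprime (p ^ r - 1) (p ^ r)" by (metis coprime_Suc_right_nat)
  moreover have "p ^ r = p * p ^ (r - 1)" using a by (metis One_nat_def Suc_pred power_Suc zero_less_one less_le_trans)
  ultimately show ?thesis by (metis coprime_mult_right_iff)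
qed

context fixes p r :: nat assumes p2: "p \<ge> 2" and r1: "r \<ge> 1" begin

lemma N_pos: "p ^ r - 1 \<ge> 1"
proof -
  have "p ^ r \<ge> p ^ 1" using p2 r1 by (intro power_increasing) auto
  then show ?thesis using p2 by simp
qed

lemma shiftnum_iter: "u \<le> p ^ r - 1 \<Longrightarrow>
   (shiftnum p r ^^ k) u = (if u = p ^ r - 1 then u else (p ^ k * u) mod (p ^ r - 1))"
proof (induction k)
  case 0
  then show ?case by simp
next
  case (Suc k)
  show ?case
  proof (cases "u = p ^ r - 1")
    case True
    then show ?thesis using Suc N_pos by (simp add: shiftnum_def)
  next
    case False
    have lt: "(p ^ k * u) mod (p ^ r - 1) < p ^ r - 1" using N_pos by simp
    then have "(p ^ k * u) mod (p ^ r - 1) \<le> p ^ r - 2" by linarith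
    then have "shiftnum p r ((p ^ k * u) mod (p ^ r - 1)) = (p ^ Suc k * u) mod (p ^ r - 1)"
      by (simp add: shiftnum_def mod_mult_right_eq mult.assoc)
    then show ?thesis using Suc False by simp
  qed
qed

lemma shiftU_iter: "(shiftU p r ^^ k) U = (\<lambda>d. (shiftnum p r ^^ k) (U d))"
  by (induction k) (auto simp: shiftU_def)

lemma shiftnum_le: "u \<le> p ^ r - 1 \<Longrightarrow> shiftnum p r u \<le> p ^ r - 1"
  using N_pos by (auto simp: shiftnum_def intro: less_imp_le)

lemma shiftnum_cong: "u \<le> p ^ r - 1 \<Longrightarrow> [shiftnum p r u = p * u] (mod (p ^ r - 1))"
proof (cases "u \<le> p ^ r - 2")
  case True
  then show ?thesis by (simp add: shiftnum_def cong_def)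
next
  case False
  assume "u \<le> p ^ r - 1"
  then have "u = p ^ r - 1" using False by linarith
  then show ?thesis using False by (simp add: shiftnum_def cong_def)
qed

lemma shiftnum_pos: "u \<le> p ^ r - 1 \<Longrightarrow> 0 < u \<Longrightarrow> 0 < shiftnum p r u"
proof (rule ccontr)
  assume a: "u \<le> p ^ r - 1" "0 < u" "\<not> 0 < shiftnum p r u"
  then have le: "u \<le> p ^ r - 2" by (auto simp: shiftnum_def split: if_splits)
  then have "(p * u) mod (p ^ r - 1) = 0" using a by (simp add: shiftnum_def)
  then have "(p ^ r - 1) dvd p * u" by auto
  then have "(p ^ r - 1) dvd u" using coprime_N[of p r] p2 r1 coprime_dvd_mult_right_iff by auto
  moreover have "u < p ^ r - 1" using le N_pos by linarith
  ultimately show False using a(2) by (simp add: nat_dvd_not_less)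
qed

lemma shiftnum_digsum: "u \<le> p ^ r - 1 \<Longrightarrow> digsum p (shiftnum p r u) = digsum p u"
proof (cases "u \<le> p ^ r - 2")
  case False
  then show ?thesis by (simp add: shiftnum_def)
next
  case True
  define N where "N = p ^ r - 1"
  define a where "a = u div p ^ (r - 1)"
  define b where "b = u mod p ^ (r - 1)"
  have pr: "p ^ r = p * p ^ (r - 1)" using r1 by (metis One_nat_def Suc_pred power_Suc zero_less_one less_le_trans)
  have ulN: "u < N" using True N_pos unfolding N_def by linarith
  have u: "u = a * p ^ (r - 1) + b" unfolding a_def b_def by (metis div_mult_mod_eq)
  have blt: "b < p ^ (r - 1)" unfolding b_def using p2 by simp
  have alt: "a < p" unfolding a_def using ulN pr N_def p2
    by (simp add: div_less_iff_less_mult)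
  have N1: "N + 1 = p ^ (r - 1) * p" using pr N_pos unfolding N_def by (simp add: mult.commute)
  have pu: "p * u = a * (N + 1) + p * b" unfolding N1 by (subst u) (simp add: algebra_simps)
  have bnd: "a + p * b \<le> N"
  proof -
    have "b \<le> p ^ (r - 1) - 1" using blt by linarith
    then have "p * b \<le> p * (p ^ (r - 1) - 1)" by simp
    then have "p * b \<le> p ^ r - p" using pr by (simp add: right_diff_distrib')
    moreover have "p \<le> p ^ r" using pr p2 by simp
    ultimately show ?thesis using alt unfolding N_def by linarith
  qed
  have neq: "a + p * b \<noteq> N"
  proof
    assume e: "a + p * b = N"
    then have "p * u = (a + 1) * N" using pu by (simp add: algebra_simps)
    then have "N dvd p * u" by simp
    then have "N dvd u" using coprime_N[of p r] p2 r1 coprime_dvd_mult_right_iff unfolding N_def by auto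
    then have "u = 0" using ulN by (metis dvd_imp_le neq0_conv not_less)
    then have "a = 0" "b = 0" unfolding a_def b_def by auto
    then show False using e N_pos unfolding N_def by simp
  qed
  have "p * u = (a + p * b) + a * N" using pu by (simp add: algebra_simps)
  then have "(p * u) mod N = (a + p * b) mod N" by simp
  also have "... = a + p * b" using bnd neq by simp
  finally have sh: "shiftnum p r u = a + p * b" using True unfolding shiftnum_def N_def by simp
  have "digsum p (a + p * b) = a + digsum p b"
    using digsum_rec[of p "a + p * b"] p2 alt by simp
  moreover have "digsum p u = a + digsum p b" by (subst u) (rule digsum_top[OF p2 alt blt])
  ultimately show ?thesis using sh by simp
qed


lemma E_le: "U \<in> E D p r \<Longrightarrow> U d \<le> p ^ r - 1"
  unfolding E_def by (cases "d \<in> D") auto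

lemma shiftU_E: assumes "finite D" "U \<in> E D p r" shows "shiftU p r U \<in> E D p r"
proof -
  have le: "\<And>d. U d \<le> p ^ r - 1" using E_le assms(2) by blast
  have out: "\<And>d. d \<notin> D \<Longrightarrow> U d = 0" using assms(2) unfolding E_def by auto
  have sh0: "shiftnum p r 0 = 0" by (simp add: shiftnum_def)
  have "(p ^ r - 1) dvd vsum D (shiftU p r U) i \<and> 0 < vsum D (shiftU p r U) i" for i
  proof
    have "[vsum D (shiftU p r U) i = (\<Sum>d\<in>D. (p * U d) * d i)] (mod (p ^ r - 1))"
      unfolding vsum_def shiftU_def
      by (intro cong_sum cong_mult shiftnum_cong le cong_refl)
    moreover have "(\<Sum>d\<in>D. (p * U d) * d i) = p * vsum D U i"
      unfolding vsum_def by (simp add: sum_distrib_left mult.assoc)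
    moreover have "(p ^ r - 1) dvd vsum D U i" using assms(2) unfolding E_def by auto
    ultimately show "(p ^ r - 1) dvd vsum D (shiftU p r U) i"
      by (metis cong_dvd_iff dvd_mult)
    have "0 < vsum D U i" using assms(2) unfolding E_def by auto
    then have "(\<Sum>d\<in>D. U d * d i) \<noteq> 0" unfolding vsum_def by simp
    then obtain d where "d \<in> D" "U d * d i \<noteq> 0" by (rule sum.not_neutral_contains_not_neutral)
    then have d: "d \<in> D" "0 < U d * d i" by auto
    then have "0 < shiftnum p r (U d) * d i" using shiftnum_pos[OF le] by simp
    then show "0 < vsum D (shiftU p r U) i" unfolding vsum_def shiftU_def
      using d(1) assms(1) by (metis (no_types, lifting) gr0I sum_eq_0_iff)
  qed
  then show ?thesis using assms(2) shiftnum_le[OF le] out sh0 r1 unfolding E_def shiftU_def by auto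
qed

lemma sU_shift: assumes "U \<in> E D p r" shows "sU D p (shiftU p r U) = sU D p U"
  unfolding sU_def shiftU_def using shiftnum_digsum[OF E_le[OF assms]] by simp

lemma period: assumes "U \<in> E D p r" shows "(shiftU p r ^^ r) U = U"
proof
  fix d
  have le: "U d \<le> p ^ r - 1" using E_le assms by blast
  have "(p ^ r * U d) mod (p ^ r - 1) = U d" if "U d \<noteq> p ^ r - 1"
  proof -
    have lt: "U d < p ^ r - 1" using le that by simp
    obtain N where N: "p ^ r = N + 1" "N = p ^ r - 1" using N_pos by simp
    have "p ^ r * U d = U d + U d * (p ^ r - 1)" unfolding N(1) by (simp add: algebra_simps)
    then have "(p ^ r * U d) mod (p ^ r - 1) = U d mod (p ^ r - 1)" by simp
    then show ?thesis using lt by simp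
  qed
  then show "(shiftU p r ^^ r) U d = U d" unfolding shiftU_iter using shiftnum_iter[OF le, of r] by simp
qed

lemma phi_shift: "phi D p r (shiftU p r U) k = phi D p r U (Suc k)"
proof -
  have "(shiftU p r ^^ k) (shiftU p r U) = (shiftU p r ^^ Suc k) U"
    by (simp only: funpow_Suc_right comp_def)
  then show ?thesis unfolding phi_def by simp
qed

lemma irr_shift: assumes "U \<in> E D p r" "irreducible_U D p r U" shows "irreducible_U D p r (shiftU p r U)"
  unfolding irreducible_U_def
proof (rule inj_onI)
  fix i j assume ij: "i \<in> {0..<r}" "j \<in> {0..<r}" "phi D p r (shiftU p r U) i = phi D p r (shiftU p r U) j"
  have inj: "inj_on (phi D p r U) {0..<r}" using assms(2) unfolding irreducible_U_def by simp
  have pr: "phi D p r U r = phi D p r U 0" unfolding phi_def using period[OF assms(1)] by simp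
  define f where "f k = (if Suc k = r then 0 else Suc k)" for k
  have f: "phi D p r U (Suc k) = phi D p r U (f k)" for k using pr unfolding f_def by auto
  have fr: "k < r \<Longrightarrow> f k \<in> {0..<r}" for k unfolding f_def using r1 by auto
  have "f i = f j" using ij inj fr f phi_shift by (metis atLeastLessThan_iff inj_onD)
  then show "i = j" unfolding f_def by (auto split: if_splits)
qed

lemma phi_bound: assumes "U \<in> E D p r" shows "phi D p r U k i \<le> (\<Sum>d\<in>D. d i)"
proof -
  have le: "(shiftU p r ^^ k) U d \<le> p ^ r - 1" for d
  proof (induction k)
    case 0 then show ?case using E_le[OF assms] by simp
  next
    case (Suc k)
    then show ?case using shiftnum_le[OF Suc.IH] by (simp only: funpow.simps comp_def shiftU_def)
  qed
  have "vsum D ((shiftU p r ^^ k) U) i \<le> (\<Sum>d\<in>D. (p ^ r - 1) * d i)"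
    unfolding vsum_def by (intro sum_mono mult_right_mono le) auto
  also have "... = (p ^ r - 1) * (\<Sum>d\<in>D. d i)" by (simp add: sum_distrib_left)
  finally have "vsum D ((shiftU p r ^^ k) U) i div (p ^ r - 1) \<le> ((p ^ r - 1) * (\<Sum>d\<in>D. d i)) div (p ^ r - 1)"
    by (rule div_le_mono)
  then show ?thesis unfolding phi_def using N_pos by simp
qed

end


lemma sU_pos: assumes "p \<ge> 2" "finite D" "U \<in> E D p r" shows "0 < sU D p U"
proof -
  have "0 < vsum D U undefined" using assms(3) unfolding E_def by auto
  then have "(\<Sum>d\<in>D. U d * d undefined) \<noteq> 0" unfolding vsum_def by simp
  then obtain d where "d \<in> D" "U d * d undefined \<noteq> 0" by (rule sum.not_neutral_contains_not_neutral)
  then have d: "d \<in> D" "0 < U d * d undefined" by auto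
  then have "0 < digsum p (U d)" using digsum_pos[OF assms(1)] by simp
  also have "... \<le> sU D p U" unfolding sU_def using d(1) assms(2) by (intro member_le_sum) auto
  finally show ?thesis .
qed

theorem lemma2p9:
  fixes D :: "('n::finite \<Rightarrow> nat) set" and p :: nat
  assumes "finite D" and "\<forall>i. \<exists>d\<in>D. d i \<noteq> 0" and "prime p"
  shows "(\<forall>r1 r2. 1 \<le> r1 \<longrightarrow> 1 \<le> r2 \<longrightarrow> r1 \<noteq> r2 \<longrightarrow> MI D p r1 \<inter> MI D p r2 = {})
    \<and> (\<exists>R. \<forall>r\<ge>R. MI D p r = {})
    \<and> (\<forall>r\<ge>1. shiftU p r ` MI D p r \<subseteq> MI D p r
         \<and> (\<forall>U\<in>MI D p r. \<forall>i k. phi D p r ((shiftU p r ^^ k) U) i = phi D p r U (i + k)))"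
proof (intro conjI allI impI)
  have p2: "p \<ge> 2" using assms(3) prime_ge_2_nat by blast
  show "MI D p r1 \<inter> MI D p r2 = {}" if "1 \<le> r1" "1 \<le> r2" "r1 \<noteq> r2" for r1 r2
  proof (rule ccontr)
    assume "MI D p r1 \<inter> MI D p r2 \<noteq> {}"
    then obtain U where U: "U \<in> MI D p r1" "U \<in> MI D p r2" by blast
    then have m1: "real (sU D p U) = real (p - 1) * real r1 * delta D p"
      and m2: "real (sU D p U) = real (p - 1) * real r2 * delta D p"
      and e: "U \<in> E D p r1" unfolding MI_def minimal_def by auto
    have "0 < sU D p U" using sU_pos[OF p2 assms(1) e] .
    then have nz: "real (p - 1) * delta D p \<noteq> 0" using m1 by auto
    have "(real (p - 1) * delta D p) * real r1 = (real (p - 1) * delta D p) * real r2"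
    proof -
      have a1: "(real (p - 1) * delta D p) * real r1 = real (sU D p U)" using m1 by (metis mult.commute mult.assoc)
      have a2: "(real (p - 1) * delta D p) * real r2 = real (sU D p U)" using m2 by (metis mult.commute mult.assoc)
      show ?thesis using a1 a2 by simp
    qed
    then have "real r1 = real r2" by (rule mult_left_cancel[OF nz, THEN iffD1])
    then show False using that(3) by simp
  qed
  define B where "B = Pi UNIV (\<lambda>i. {..(\<Sum>d\<in>D. d i)})"
  have fB: "finite B" unfolding B_def by (metis PiE_UNIV_domain finite_PiE finite_atMost finite_UNIV)
  show "\<exists>R. \<forall>r\<ge>R. MI D p r = {}"
  proof (intro exI allI impI)
    fix r assume r: "Suc (card B) \<le> r"
    show "MI D p r = {}"
    proof (rule ccontr)
      assume "MI D p r \<noteq> {}"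
      then obtain U where U: "U \<in> MI D p r" by blast
      then have e: "U \<in> E D p r" and inj: "inj_on (phi D p r U) {0..<r}"
        unfolding MI_def irreducible_U_def by auto
      have r1: "r \<ge> 1" using r by simp
      have "phi D p r U ` {0..<r} \<subseteq> B" unfolding B_def using phi_bound[OF p2 r1 e] by auto
      then have "card {0..<r} \<le> card B" using card_inj_on_le[OF inj _ fB] by blast
      then show False using r by simp
    qed
  qed
  fix r :: nat assume r1: "1 \<le> r"
  show "shiftU p r ` MI D p r \<subseteq> MI D p r"
  proof
    fix V assume "V \<in> shiftU p r ` MI D p r"
    then obtain U where U: "U \<in> MI D p r" "V = shiftU p r U" by blast
    then have e: "U \<in> E D p r" and m: "minimal D p r U" and ir: "irreducible_U D p r U"
      unfolding MI_def by auto
    have eV: "V \<in> E D p r" using shiftU_E[OF p2 r1 assms(1) e] U by simp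
    have "minimal D p r V" using m eV sU_shift[OF p2 r1 e] U unfolding minimal_def by simp
    moreover have "irreducible_U D p r V" using irr_shift[OF p2 r1 e ir] U by simp
    ultimately show "V \<in> MI D p r" using eV unfolding MI_def by simp
  qed
  show "\<forall>U\<in>MI D p r. \<forall>i k. phi D p r ((shiftU p r ^^ k) U) i = phi D p r U (i + k)"
    unfolding phi_def by (simp add: funpow_add)
qed

end
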